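(* Fix $M>0$ and $0\le\theta<2s-1$. If $\limsup_{n\to\infty}\Delta_n n^{\frac{4s}{4s+\theta+1}}<\infty$, then $$\liminf_{n\to\infty}\inf_{T\in\mathcal T_n}\big[\mathbb E_{P_0}T+\beta(T;\Delta_n,\theta,M)\big]>0,$$ where $\mathcal T_n$ is the collection of all measurable test functions $T:\mathcal X^n\to[0,1]$ of $X_1,\dots,X_n$.
   Context: Standing setup. $(\mathcal X,\mathcal B)$ is a measurable space and $P_0$ a known probability measure on it. $K$ is a symmetric, positive semidefinite, square-integrable kernel, degenerate under $P_0$, with Mercer decomposition $K(x,x')=\sum_{k\ge1}\lambda_k\varphi_k(x)\varphi_k(x')$, infinitely many eigenvalues $\lambda_1>\lambda_2>\cdots>0$, $\{\varphi_k\}$ an orthonormal basis of the $P_0$-mean-zero functions in $L_2(P_0)$, $0<\liminf_k k^{2s}\lambda_k\le\limsup_k k^{2s}\lambda_k<\infty$ for some $s>1/2$, and $\sup_k\|\varphi_k\|_\infty<\infty$. $\mathcal H(K)$ is the RKHS of $K$, $\|f\|_K^2=\sum_k\lambda_k^{-1}\langle f,\varphi_k\rangle_{L_2(P_0)}^2$. $\mathcal F(\theta;M)$ ($\theta>0$) is the set of $f\in L_2(P_0)$ such that for every $R>0$ there is $f_R\in\mathcal H(K)$ with $\|f_R\|_K\le R$ and $\|f-f_R\|_{L_2(P_0)}\le MR^{-1/\theta}$; $\mathcal F(0;M)=\{f\in\mathcal H(K):\|f\|_K\le M\}$. $\mathcal P(\Delta,\theta,M)$ is the set of probability measures $P\ll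 P_0$ with $u=dP/dP_0-1\in\mathcal F(\theta;M)$ and $\|u\|^2_{L_2(P_0)}\ge\Delta$. Type II error: $\beta(T;\Delta,\theta,M)=\sup_{P\in\mathcal P(\Delta,\theta,M)}\mathbb E_P[1-T(X_1,\dots,X_n)]$ with $X_i$ i.i.d. $P$; $\mathbb E_{P_0}T$ is the type I error. *)

theory Defs
  imports "HOL-Probability.Probability"
begin

definition L2 :: "'a measure \<Rightarrow> ('a \<Rightarrow> real) \<Rightarrow> bool" where
  "L2 P0 f \<longleftrightarrow> f \<in> borel_measurable P0 \<and> integrable P0 (\<lambda>x. (f x)^2)"

definition inner_L2 :: "'a measure \<Rightarrow> ('a \<Rightarrow> real) \<Rightarrow> ('a \<Rightarrow> real) \<Rightarrow> real" where
  "inner_L2 P0 f g = (\<integral>x. f x * g x \<partial>P0)"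

definition norm_L2 :: "'a measure \<Rightarrow> ('a \<Rightarrow> real) \<Rightarrow> real" where
  "norm_L2 P0 f = sqrt (\<integral>x. (f x)^2 \<partial>P0)"

text \<open>RKHS H(K) of the Mercer kernel sum_k lam k * phi k x * phi k x' (index k = 0 is the
  paper's k = 1): mean-zero L2 functions with finite norm sum_k lam_k^-1 <f,phi_k>^2.\<close>
definition in_RKHS :: "'a measure \<Rightarrow> (nat \<Rightarrow> real) \<Rightarrow> (nat \<Rightarrow> 'a \<Rightarrow> real) \<Rightarrow> ('a \<Rightarrow> real) \<Rightarrow> bool" where
  "in_RKHS P0 lam phi f \<longleftrightarrow> L2 P0 f \<and> (\<integral>x. f x \<partial>P0) = 0 \<and>
     summable (\<lambda>k. (inner_L2 P0 f (phi k))^2 / lam k)"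

definition rkhs_norm :: "'a measure \<Rightarrow> (nat \<Rightarrow> real) \<Rightarrow> (nat \<Rightarrow> 'a \<Rightarrow> real) \<Rightarrow> ('a \<Rightarrow> real) \<Rightarrow> real" where
  "rkhs_norm P0 lam phi f = sqrt (\<Sum>k. (inner_L2 P0 f (phi k))^2 / lam k)"

definition Fclass :: "'a measure \<Rightarrow> (nat \<Rightarrow> real) \<Rightarrow> (nat \<Rightarrow> 'a \<Rightarrow> real) \<Rightarrow> real \<Rightarrow> real \<Rightarrow> ('a \<Rightarrow> real) set" where
  "Fclass P0 lam phi \<theta> M =
     (if \<theta> = 0 then {f. in_RKHS P0 lam phi f \<and> rkhs_norm P0 lam phi f \<le> M}
      else {f. L2 P0 f \<and> (\<forall>R>0. \<exists>g. in_RKHS P0 lam phi g \<and> rkhs_norm P0 lam phi g \<le> R \<and>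
                 norm_L2 P0 (\<lambda>x. f x - g x) \<le> M * R powr (- 1 / \<theta>))})"

definition dev :: "'a measure \<Rightarrow> 'a measure \<Rightarrow> 'a \<Rightarrow> real" where
  "dev P0 P = (\<lambda>x. enn2real (RN_deriv P0 P x) - 1)"

definition Pclass :: "'a measure \<Rightarrow> (nat \<Rightarrow> real) \<Rightarrow> (nat \<Rightarrow> 'a \<Rightarrow> real) \<Rightarrow> real \<Rightarrow> real \<Rightarrow> real \<Rightarrow> 'a measure set" where
  "Pclass P0 lam phi \<Delta> \<theta> M = {P. prob_space P \<and> sets P = sets P0 \<and> absolutely_continuous P0 P \<and>
      dev P0 P \<in> Fclass P0 lam phi \<theta> M \<and> (norm_L2 P0 (dev P0 P))^2 \<ge> \<Delta>}"

definition tests :: "'a measure \<Rightarrow> nat \<Rightarrow> ((nat \<Rightarrow> 'a) \<Rightarrow> real) set" where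
  "tests P0 n = {T. T \<in> borel_measurable (PiM {..<n} (\<lambda>_. P0)) \<and> (\<forall>\<omega>. 0 \<le> T \<omega> \<and> T \<omega> \<le> 1)}"

definition type2 :: "'a measure \<Rightarrow> (nat \<Rightarrow> real) \<Rightarrow> (nat \<Rightarrow> 'a \<Rightarrow> real) \<Rightarrow> nat \<Rightarrow> ((nat \<Rightarrow> 'a) \<Rightarrow> real)
     \<Rightarrow> real \<Rightarrow> real \<Rightarrow> real \<Rightarrow> ereal" where
  "type2 P0 lam phi n T \<Delta> \<theta> M =
     (SUP P\<in>Pclass P0 lam phi \<Delta> \<theta> M. ereal (\<integral>\<omega>. 1 - T \<omega> \<partial>(PiM {..<n} (\<lambda>_. P))))"

end

theory Submission
  imports Defs
begin

lemma cosh_bound: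
  fixes t :: real assumes "0 \<le> t" "t \<le> 1"
  shows "exp t + exp (-t) \<le> 2 * (1 + t^2)"
proof -
  have a: "exp t \<le> 1 + t + t^2" using exp_bound assms by auto
  have "exp t \<ge> 1 + t" by (rule exp_ge_add_one_self)
  then have "exp (-t) \<le> 1 / (1 + t)" using assms by (simp add: exp_minus field_simps)
  also have "\<dots> \<le> 1 - t + t^2" using assms
    by (simp add: field_simps power2_eq_square)
  finally show ?thesis using a by simp
qed

lemma sum_pm1: "x \<in> {-1, 1::real} \<Longrightarrow> (\<Sum>y\<in>{-1,1::real}. exp (t * (x * y))) = exp t + exp (-t)"
  by auto

lemma rademacher_bound:
  fixes S :: "nat set" and t :: real
  assumes fin: "finite S" and t: "0 \<le> t" "t \<le> 1"
  shows "(\<Sum>\<xi>\<in>PiE S (\<lambda>_. {-1,1::real}). \<Sum>\<xi>'\<in>PiE S (\<lambda>_. {-1,1::real}).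
            exp (t * (\<Sum>k\<in>S. \<xi> k * \<xi>' k))) \<le> 4 ^ card S * exp (real (card S) * t^2)"
proof -
  let ?X = "PiE S (\<lambda>_. {-1,1::real})"
  have inner: "(\<Sum>\<xi>'\<in>?X. exp (t * (\<Sum>k\<in>S. \<xi> k * \<xi>' k))) = (exp t + exp (-t)) ^ card S"
    if "\<xi> \<in> ?X" for \<xi>
  proof -
    have "(\<Sum>\<xi>'\<in>?X. exp (t * (\<Sum>k\<in>S. \<xi> k * \<xi>' k))) = (\<Sum>\<xi>'\<in>?X. \<Prod>k\<in>S. exp (t * (\<xi> k * \<xi>' k)))"
      by (simp add: sum_distrib_left exp_sum fin)
    also have "\<dots> = (\<Prod>k\<in>S. \<Sum>y\<in>{-1,1::real}. exp (t * (\<xi> k * y)))"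
      by (rule prod_sum_PiE[symmetric]) (auto simp: fin)
    also have "\<dots> = (\<Prod>k\<in>S. exp t + exp (-t))"
      using that by (intro prod.cong refl sum_pm1) (auto simp: PiE_iff)
    finally show ?thesis by simp
  qed
  have cardX: "card ?X = 2 ^ card S" using fin by (simp add: card_PiE numeral_2_eq_2)
  have "(\<Sum>\<xi>\<in>?X. \<Sum>\<xi>'\<in>?X. exp (t * (\<Sum>k\<in>S. \<xi> k * \<xi>' k))) = (\<Sum>\<xi>\<in>?X. (exp t + exp (-t)) ^ card S)"
    by (rule sum.cong) (auto simp: inner)
  also have "\<dots> = 2 ^ card S * (exp t + exp (-t)) ^ card S" using cardX by simp
  also have "\<dots> \<le> 2 ^ card S * (2 * (1 + t^2)) ^ card S"
    by (intro mult_left_mono power_mono cosh_bound t) (auto intro: add_nonneg_nonneg)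
  also have "\<dots> = 4 ^ card S * (1 + t^2) ^ card S"
  proof -
    have "(2 * (1 + t^2)) ^ card S = (2::real) ^ card S * (1 + t^2) ^ card S" by (rule power_mult_distrib)
    moreover have "(2::real) ^ card S * 2 ^ card S = 4 ^ card S"
      by (metis power_mult_distrib num_double numeral_times_numeral)
    ultimately show ?thesis by (simp only: mult.assoc[symmetric])
  qed
  also have "(1 + t^2) ^ card S \<le> exp (t^2) ^ card S"
    by (intro power_mono) (auto simp: add.commute exp_ge_add_one_self)
  also have "exp (t^2) ^ card S = exp (real (card S) * t^2)" by (simp add: exp_of_nat_mult)
  finally show ?thesis by simp
qed

lemma PiM_density:
  fixes P0 :: "'a measure" and g :: "'a \<Rightarrow> real"
  assumes P0: "prob_space P0" and g[measurable]: "g \<in> borel_measurable P0"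
    and Q: "prob_space (density P0 (\<lambda>x. ennreal (g x)))" and I: "finite I"
  shows "PiM I (\<lambda>_. density P0 (\<lambda>x. ennreal (g x))) =
         density (PiM I (\<lambda>_. P0)) (\<lambda>\<omega>. \<Prod>i\<in>I. ennreal (g (\<omega> i)))"
proof -
  let ?Q = "density P0 (\<lambda>x. ennreal (g x))"
  interpret Qp: product_sigma_finite "\<lambda>_. ?Q"
    using Q by (simp add: product_sigma_finite_def prob_space_imp_sigma_finite)
  interpret Pp: product_sigma_finite "\<lambda>_. P0"
    using P0 by (simp add: product_sigma_finite_def prob_space_imp_sigma_finite)
  have sQ: "sets ?Q = sets P0" by simp
  have sPi: "sets (PiM I (\<lambda>_. ?Q)) = sets (PiM I (\<lambda>_. P0))"
    by (rule sets_PiM_cong) auto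
  show ?thesis
  proof (rule Qp.PiM_eqI[symmetric, OF I])
    show "sets (density (PiM I (\<lambda>_. P0)) (\<lambda>\<omega>. \<Prod>i\<in>I. ennreal (g (\<omega> i)))) = sets (PiM I (\<lambda>_. ?Q))"
      using sPi by simp
    fix A assume A: "\<And>i. i \<in> I \<Longrightarrow> A i \<in> sets ?Q"
    then have A': "\<And>i. i \<in> I \<Longrightarrow> A i \<in> sets P0" by simp
    have PA: "Pi\<^sub>E I A \<in> sets (PiM I (\<lambda>_. P0))"
      using A' by (intro sets_PiM_I_finite I) auto
    have "emeasure (density (PiM I (\<lambda>_. P0)) (\<lambda>\<omega>. \<Prod>i\<in>I. ennreal (g (\<omega> i)))) (Pi\<^sub>E I A)
        = (\<integral>\<^sup>+\<omega>. (\<Prod>i\<in>I. ennreal (g (\<omega> i))) * indicator (Pi\<^sub>E I A) \<omega> \<partial>PiM I (\<lambda>_. P0))"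
      using PA by (intro emeasure_density) auto
    also have "\<dots> = (\<integral>\<^sup>+\<omega>. (\<Prod>i\<in>I. ennreal (g (\<omega> i)) * indicator (A i) (\<omega> i)) \<partial>PiM I (\<lambda>_. P0))"
    proof (rule nn_integral_cong)
      fix \<omega> assume "\<omega> \<in> space (PiM I (\<lambda>_. P0))"
      then have ext: "\<omega> \<in> extensional I" by (auto simp: space_PiM PiE_def)
      show "(\<Prod>i\<in>I. ennreal (g (\<omega> i))) * indicator (Pi\<^sub>E I A) \<omega> = (\<Prod>i\<in>I. ennreal (g (\<omega> i)) * indicator (A i) (\<omega> i))"
      proof (cases "\<omega> \<in> Pi\<^sub>E I A")
        case True then show ?thesis by (auto simp: prod.distrib PiE_iff indicator_def)
      next
        case False
        then obtain j where j: "j \<in> I" "\<omega> j \<notin> A j" using ext by (auto simp: PiE_iff)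
        then have "(\<Prod>i\<in>I. ennreal (g (\<omega> i)) * indicator (A i) (\<omega> i)) = 0"
          using I by (intro prod_zero bexI[of _ j]) auto
        with False show ?thesis by simp
      qed
    qed
    also have "\<dots> = (\<Prod>i\<in>I. \<integral>\<^sup>+x. ennreal (g x) * indicator (A i) x \<partial>P0)"
      using A' by (subst Pp.product_nn_integral_prod[OF I]) auto
    also have "\<dots> = (\<Prod>i\<in>I. emeasure ?Q (A i))"
      using A' by (intro prod.cong refl emeasure_density[symmetric]) auto
    finally show "emeasure (density (PiM I (\<lambda>_. P0)) (\<lambda>\<omega>. \<Prod>i\<in>I. ennreal (g (\<omega> i)))) (Pi\<^sub>E I A) = (\<Prod>i\<in>I. emeasure ?Q (A i))" .
  qed
qed

lemma density_prob:
  assumes P0: "prob_space P0" and g[measurable]: "g \<in> borel_measurable P0"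
    and g0: "\<And>x. 0 \<le> g x" and gi: "integrable P0 g" and g1: "(\<integral>x. g x \<partial>P0) = 1"
  shows "prob_space (density P0 (\<lambda>x. ennreal (g x)))"
proof
  have "emeasure (density P0 (\<lambda>x. ennreal (g x))) (space (density P0 (\<lambda>x. ennreal (g x))))
       = (\<integral>\<^sup>+x. ennreal (g x) * indicator (space P0) x \<partial>P0)"
    by (simp add: emeasure_density)
  also have "\<dots> = (\<integral>\<^sup>+x. ennreal (g x) \<partial>P0)"
    by (intro nn_integral_cong) auto
  also have "\<dots> = 1" using nn_integral_eq_integral[OF gi] g0 g1 by simp
  finally show "emeasure (density P0 (\<lambda>x. ennreal (g x))) (space (density P0 (\<lambda>x. ennreal (g x)))) = 1" .
qed

lemma pointwise1:
  fixes L T V :: real assumes "0 \<le> L" "0 < V"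
  shows "L \<le> (V + 1) * min 1 L + L^2 / (4 * V)"
proof (cases "L \<le> 1")
  case True
  have "0 \<le> V * L" using assms by simp
  moreover have "0 \<le> L^2 / (4*V)" using assms by simp
  ultimately show ?thesis using True by (simp add: algebra_simps)
next
  case False
  have "0 \<le> (L - 2*V)^2" by simp
  then have "4*V*L \<le> L^2 + 4*V^2" by (simp add: power2_eq_square algebra_simps)
  then have "L \<le> L^2/(4*V) + V" using assms by (simp add: field_simps power2_eq_square)
  then show ?thesis using False by simp
qed

lemma pointwise2:
  fixes L T :: real assumes "0 \<le> L" "0 \<le> T" "T \<le> 1"
  shows "min 1 L \<le> T + L * (1 - T)"
proof (cases "L \<le> 1")
  case True
  have "L * T \<le> T" using True assms by (simp add: mult_left_le_one_le)
  then show ?thesis using True by (simp add: algebra_simps)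
next
  case False
  have "1 - T \<le> L * (1 - T)" using False assms by (simp add: mult_le_cancel_right1)
  then show ?thesis using False by simp
qed

lemma lecam:
  fixes P0 :: "'a measure" and X :: "'i set" and g :: "'i \<Rightarrow> 'a \<Rightarrow> real"
    and T :: "(nat \<Rightarrow> 'a) \<Rightarrow> real" and n :: nat and V b :: real
  assumes P0: "prob_space P0" and X: "finite X" "X \<noteq> {}"
    and gm: "\<And>\<xi>. \<xi> \<in> X \<Longrightarrow> g \<xi> \<in> borel_measurable P0"
    and g0: "\<And>\<xi> x. \<xi> \<in> X \<Longrightarrow> 0 \<le> g \<xi> x" and gb: "\<And>\<xi> x. \<xi> \<in> X \<Longrightarrow> g \<xi> x \<le> b"
    and g1: "\<And>\<xi>. \<xi> \<in> X \<Longrightarrow> (\<integral>x. g \<xi> x \<partial>P0) = 1"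
    and Tm: "T \<in> borel_measurable (PiM {..<n} (\<lambda>_. P0))" and T01: "\<And>\<omega>. 0 \<le> T \<omega> \<and> T \<omega> \<le> 1"
    and V: "0 < V"
    and VL: "(\<Sum>\<xi>\<in>X. \<Sum>\<xi>'\<in>X. (\<integral>x. g \<xi> x * g \<xi>' x \<partial>P0) ^ n) / (real (card X))^2 \<le> V"
  shows "\<exists>\<xi>\<in>X. 3 / (4 * (V + 1)) \<le> (\<integral>\<omega>. T \<omega> \<partial>PiM {..<n} (\<lambda>_. P0))
            + (\<integral>\<omega>. 1 - T \<omega> \<partial>PiM {..<n} (\<lambda>_. density P0 (\<lambda>x. ennreal (g \<xi> x))))"
proof -
  interpret Pp: product_prob_space "\<lambda>_. P0" "{..<n}"
    using P0 by (simp add: product_prob_space_def product_prob_space_axioms_def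
        product_sigma_finite_def prob_space_imp_sigma_finite)
  have fmP0: "finite_measure P0" using P0 unfolding prob_space_def by simp
  define M where "M = PiM {..<n} (\<lambda>_. P0)"
  interpret PM: prob_space M unfolding M_def by (intro prob_space_PiM P0)
  define G where "G \<xi> \<omega> = (\<Prod>i<n. g \<xi> (\<omega> i))" for \<xi> \<omega>
  define c where "c = real (card X)"
  have c0: "0 < c" using X by (simp add: c_def card_gt_0_iff)
  define L where "L \<omega> = (\<Sum>\<xi>\<in>X. G \<xi> \<omega>) / c" for \<omega>
  have b0: "0 \<le> b" using X g0 gb by (meson all_not_in_conv order_trans)
  have Gm[measurable]: "G \<xi> \<in> borel_measurable M" if "\<xi> \<in> X" for \<xi>
    using gm[OF that] unfolding G_def M_def by measurable
  have G0: "0 \<le> G \<xi> \<omega>" if "\<xi> \<in> X" for \<xi> \<omega>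
    unfolding G_def using g0[OF that] by (simp add: prod_nonneg)
  have Gb: "G \<xi> \<omega> \<le> b ^ n" if "\<xi> \<in> X" for \<xi> \<omega>
  proof -
    have "G \<xi> \<omega> \<le> (\<Prod>i<n. b)" unfolding G_def
      using g0[OF that] gb[OF that] by (intro prod_mono) auto
    then show ?thesis by simp
  qed
  have Tm'[measurable]: "T \<in> borel_measurable M" using Tm by (simp add: M_def)
  have intb: "integrable M f" if "f \<in> borel_measurable M" "\<And>\<omega>. \<bar>f \<omega>\<bar> \<le> K" for f :: "(nat \<Rightarrow> 'a) \<Rightarrow> real" and K :: real
    by (rule PM.integrable_const_bound[where B=K]) (use that in auto)
  have Gi: "integrable M (G \<xi>)" if "\<xi> \<in> X" for \<xi>
    using G0[OF that] Gb[OF that] by (intro intb[of _ "b^n"]) (auto simp: that)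
  have EG: "(\<integral>\<omega>. G \<xi> \<omega> \<partial>M) = 1" if "\<xi> \<in> X" for \<xi>
  proof -
    have "(\<integral>\<omega>. G \<xi> \<omega> \<partial>M) = (\<Prod>i<n. \<integral>x. g \<xi> x \<partial>P0)"
      unfolding G_def M_def
      using gm[OF that] g0[OF that] gb[OF that]
      by (intro Pp.product_integral_prod) (auto intro!: finite_measure.integrable_const_bound[where B=b, OF fmP0])
    then show ?thesis using g1[OF that] by simp
  qed
  have EGG: "(\<integral>\<omega>. G \<xi> \<omega> * G \<xi>' \<omega> \<partial>M) = (\<integral>x. g \<xi> x * g \<xi>' x \<partial>P0) ^ n"
    if "\<xi> \<in> X" "\<xi>' \<in> X" for \<xi> \<xi>'
  proof -
    have "(\<integral>\<omega>. G \<xi> \<omega> * G \<xi>' \<omega> \<partial>M) = (\<integral>\<omega>. (\<Prod>i<n. g \<xi> (\<omega> i) * g \<xi>' (\<omega> i)) \<partial>M)"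
      unfolding G_def by (simp add: prod.distrib)
    also have "\<dots> = (\<Prod>i<n. \<integral>x. g \<xi> x * g \<xi>' x \<partial>P0)"
      unfolding M_def
      using gm[OF that(1)] gm[OF that(2)] g0[OF that(1)] gb[OF that(1)] g0[OF that(2)] gb[OF that(2)] b0
      by (intro Pp.product_integral_prod)
         (auto intro!: finite_measure.integrable_const_bound[where B="b*b", OF fmP0] simp: abs_mult intro!: AE_I2 mult_mono)
    finally show ?thesis by simp
  qed
  have Lm[measurable]: "L \<in> borel_measurable M" unfolding L_def
    using Gm by (intro borel_measurable_divide borel_measurable_sum) auto
  have L0: "0 \<le> L \<omega>" for \<omega> unfolding L_def using G0 c0 by (simp add: sum_nonneg)
  have Lb: "L \<omega> \<le> b ^ n" for \<omega>
  proof -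
    have "(\<Sum>\<xi>\<in>X. G \<xi> \<omega>) \<le> (\<Sum>\<xi>\<in>X. b ^ n)" using Gb by (intro sum_mono) auto
    then show ?thesis unfolding L_def using c0 by (simp add: c_def divide_le_eq mult.commute)
  qed
  have Li: "integrable M L" using L0 Lb by (intro intb[of _ "b^n"]) auto
  have L2i: "integrable M (\<lambda>\<omega>. (L \<omega>)^2)"
    using L0 Lb by (intro intb[of _ "(b^n)^2"]) (auto intro: power_mono)
  have EL: "(\<integral>\<omega>. L \<omega> \<partial>M) = 1"
  proof -
    have "(\<integral>\<omega>. L \<omega> \<partial>M) = (\<Sum>\<xi>\<in>X. \<integral>\<omega>. G \<xi> \<omega> \<partial>M) / c"
      unfolding L_def by (simp add: integral_sum Gi)
    also have "\<dots> = 1" using EG c0 by (simp add: c_def)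
    finally show ?thesis .
  qed
  have EL2: "(\<integral>\<omega>. (L \<omega>)^2 \<partial>M) \<le> V"
  proof -
    have "(\<integral>\<omega>. (L \<omega>)^2 \<partial>M) = (\<integral>\<omega>. (\<Sum>\<xi>\<in>X. \<Sum>\<xi>'\<in>X. G \<xi> \<omega> * G \<xi>' \<omega>) / c^2 \<partial>M)"
      unfolding L_def by (simp add: power2_eq_square sum_product)
    also have "\<dots> = (\<Sum>\<xi>\<in>X. \<Sum>\<xi>'\<in>X. \<integral>\<omega>. G \<xi> \<omega> * G \<xi>' \<omega> \<partial>M) / c^2"
    proof -
      have ii: "integrable M (\<lambda>\<omega>. G \<xi> \<omega> * G \<xi>' \<omega>)" if "\<xi> \<in> X" "\<xi>' \<in> X" for \<xi> \<xi>'
        using G0 Gb that b0 by (intro intb[of _ "b^n*b^n"]) (auto simp: abs_mult intro!: mult_mono)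
      show ?thesis
        by (simp add: integral_sum ii integrable_sum)
    qed
    also have "\<dots> = (\<Sum>\<xi>\<in>X. \<Sum>\<xi>'\<in>X. (\<integral>x. g \<xi> x * g \<xi>' x \<partial>P0) ^ n) / c^2"
      by (simp add: EGG)
    also have "\<dots> \<le> V" using VL by (simp add: c_def)
    finally show ?thesis .
  qed
  have minm[measurable]: "(\<lambda>\<omega>. min 1 (L \<omega>)) \<in> borel_measurable M" by measurable
  have mini: "integrable M (\<lambda>\<omega>. min 1 (L \<omega>))" using L0 by (intro intb[of _ 1]) auto
  have step1: "1 \<le> (V + 1) * (\<integral>\<omega>. min 1 (L \<omega>) \<partial>M) + 1/4"
  proof -
    have "1 = (\<integral>\<omega>. L \<omega> \<partial>M)" using EL by simp
    also have "\<dots> \<le> (\<integral>\<omega>. (V + 1) * min 1 (L \<omega>) + (L \<omega>)^2 / (4 * V) \<partial>M)"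
      using L0 V by (intro integral_mono Li pointwise1 Bochner_Integration.integrable_add[OF integrable_mult_right[OF mini] integrable_divide[OF L2i]]) auto
    also have "\<dots> = (V + 1) * (\<integral>\<omega>. min 1 (L \<omega>) \<partial>M) + (\<integral>\<omega>. (L \<omega>)^2 \<partial>M) / (4 * V)"
      by (simp add: mini L2i)
    also have "(\<integral>\<omega>. (L \<omega>)^2 \<partial>M) / (4 * V) \<le> V / (4 * V)"
      using EL2 V by (intro divide_right_mono) auto
    also have "V / (4 * V) = 1/4" using V by simp
    finally show ?thesis by simp
  qed
  then have step2: "3 / (4 * (V + 1)) \<le> (\<integral>\<omega>. min 1 (L \<omega>) \<partial>M)"
    using V by (simp add: field_simps)
  have Ti: "integrable M T" using T01 by (intro intb[of _ 1]) auto
  have GTi: "integrable M (\<lambda>\<omega>. G \<xi> \<omega> * (1 - T \<omega>))" if "\<xi> \<in> X" for \<xi>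
  proof (rule intb[of _ "b^n"])
    show "(\<lambda>\<omega>. G \<xi> \<omega> * (1 - T \<omega>)) \<in> borel_measurable M" using that by measurable
    fix \<omega>
    have "G \<xi> \<omega> * (1 - T \<omega>) \<le> G \<xi> \<omega> * 1"
      using G0[OF that] T01[of \<omega>] by (intro mult_left_mono) auto
    moreover have "0 \<le> G \<xi> \<omega> * (1 - T \<omega>)" using G0[OF that] T01[of \<omega>] by simp
    ultimately show "\<bar>G \<xi> \<omega> * (1 - T \<omega>)\<bar> \<le> b^n" using Gb[OF that, of \<omega>] by simp
  qed
  have step3: "(\<integral>\<omega>. min 1 (L \<omega>) \<partial>M) \<le> (\<integral>\<omega>. T \<omega> \<partial>M) + (\<Sum>\<xi>\<in>X. \<integral>\<omega>. G \<xi> \<omega> * (1 - T \<omega>) \<partial>M) / c"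
  proof -
    have "(\<integral>\<omega>. min 1 (L \<omega>) \<partial>M) \<le> (\<integral>\<omega>. T \<omega> + L \<omega> * (1 - T \<omega>) \<partial>M)"
    proof (rule integral_mono[OF mini])
      show "integrable M (\<lambda>\<omega>. T \<omega> + L \<omega> * (1 - T \<omega>))"
      proof (rule intb[of _ "1 + b^n"])
        show "(\<lambda>\<omega>. T \<omega> + L \<omega> * (1 - T \<omega>)) \<in> borel_measurable M" by measurable
        fix \<omega>
        have "L \<omega> * (1 - T \<omega>) \<le> L \<omega> * 1"
          using L0[of \<omega>] T01[of \<omega>] by (intro mult_left_mono) auto
        moreover have "0 \<le> L \<omega> * (1 - T \<omega>)" using L0[of \<omega>] T01[of \<omega>] by simp
        ultimately show "\<bar>T \<omega> + L \<omega> * (1 - T \<omega>)\<bar> \<le> 1 + b^n" using Lb[of \<omega>] T01[of \<omega>] by simp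
      qed
      show "min 1 (L \<omega>) \<le> T \<omega> + L \<omega> * (1 - T \<omega>)" for \<omega>
        using L0 T01 by (intro pointwise2) auto
    qed
    also have "(\<lambda>\<omega>. T \<omega> + L \<omega> * (1 - T \<omega>)) = (\<lambda>\<omega>. T \<omega> + (\<Sum>\<xi>\<in>X. G \<xi> \<omega> * (1 - T \<omega>)) / c)"
      by (simp add: L_def sum_distrib_right)
    also have "(\<integral>\<omega>. T \<omega> + (\<Sum>\<xi>\<in>X. G \<xi> \<omega> * (1 - T \<omega>)) / c \<partial>M)
        = (\<integral>\<omega>. T \<omega> \<partial>M) + (\<Sum>\<xi>\<in>X. \<integral>\<omega>. G \<xi> \<omega> * (1 - T \<omega>) \<partial>M) / c"
      using GTi Ti by (simp add: integral_sum integrable_sum)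
    finally show ?thesis .
  qed
  have dens: "(\<integral>\<omega>. 1 - T \<omega> \<partial>PiM {..<n} (\<lambda>_. density P0 (\<lambda>x. ennreal (g \<xi> x))))
        = (\<integral>\<omega>. G \<xi> \<omega> * (1 - T \<omega>) \<partial>M)" if "\<xi> \<in> X" for \<xi>
  proof -
    have gi: "integrable P0 (g \<xi>)"
      using gm[OF that] g0[OF that] gb[OF that] by (intro finite_measure.integrable_const_bound[where B=b, OF fmP0]) auto
    have Q: "prob_space (density P0 (\<lambda>x. ennreal (g \<xi> x)))"
      by (rule density_prob[OF P0 gm[OF that] g0[OF that] gi g1[OF that]])
    have "PiM {..<n} (\<lambda>_. density P0 (\<lambda>x. ennreal (g \<xi> x))) =
         density M (\<lambda>\<omega>. \<Prod>i\<in>{..<n}. ennreal (g \<xi> (\<omega> i)))"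
      unfolding M_def by (rule PiM_density[OF P0 gm[OF that] Q]) simp
    also have "(\<lambda>\<omega>. \<Prod>i\<in>{..<n}. ennreal (g \<xi> (\<omega> i))) = (\<lambda>\<omega>. ennreal (G \<xi> \<omega>))"
      unfolding G_def using g0[OF that] by (intro ext prod_ennreal) auto
    finally have "PiM {..<n} (\<lambda>_. density P0 (\<lambda>x. ennreal (g \<xi> x))) = density M (\<lambda>\<omega>. ennreal (G \<xi> \<omega>))" .
    then show ?thesis
      using G0[OF that] Gm[OF that] by (simp add: integral_density)
  qed
  have avg: "3 / (4 * (V + 1)) - (\<integral>\<omega>. T \<omega> \<partial>M) \<le> (\<Sum>\<xi>\<in>X. \<integral>\<omega>. G \<xi> \<omega> * (1 - T \<omega>) \<partial>M) / c"
    using step2 step3 by simp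
  show ?thesis
  proof (rule ccontr)
    assume "\<not> ?thesis"
    then have lt: "\<And>\<xi>. \<xi> \<in> X \<Longrightarrow> (\<integral>\<omega>. G \<xi> \<omega> * (1 - T \<omega>) \<partial>M) < 3 / (4 * (V + 1)) - (\<integral>\<omega>. T \<omega> \<partial>M)"
      using dens by (fastforce simp: M_def)
    have "(\<Sum>\<xi>\<in>X. \<integral>\<omega>. G \<xi> \<omega> * (1 - T \<omega>) \<partial>M) < (\<Sum>\<xi>\<in>X. 3 / (4 * (V + 1)) - (\<integral>\<omega>. T \<omega> \<partial>M))"
      using X lt by (intro sum_strict_mono) auto
    also have "\<dots> = c * (3 / (4 * (V + 1)) - (\<integral>\<omega>. T \<omega> \<partial>M))" by (simp add: c_def)
    finally have "(\<Sum>\<xi>\<in>X. \<integral>\<omega>. G \<xi> \<omega> * (1 - T \<omega>) \<partial>M) / c < 3 / (4 * (V + 1)) - (\<integral>\<omega>. T \<omega> \<partial>M)"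
      using c0 by (simp add: divide_less_eq mult.commute)
    with avg show False by simp
  qed
qed

locale psetup =
  fixes P0 :: "'a measure" and phi :: "nat \<Rightarrow> 'a \<Rightarrow> real" and C :: real
  assumes P0: "prob_space P0"
    and phi_L2: "\<forall>k. L2 P0 (phi k)"
    and phi_mean: "\<forall>k. (\<integral>x. phi k x \<partial>P0) = 0"
    and phi_orth: "\<forall>j k. inner_L2 P0 (phi j) (phi k) = (if j = k then 1 else 0)"
    and phiC: "\<forall>k. AE x in P0. \<bar>phi k x\<bar> \<le> C"
    and C0: "0 \<le> C"
begin

definition psi :: "nat \<Rightarrow> 'a \<Rightarrow> real" where
  "psi k x = max (-C) (min C (phi k x))"

lemma phi_meas[measurable]: "phi k \<in> borel_measurable P0"
  using phi_L2 by (simp add: L2_def)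

lemma psi_meas[measurable]: "psi k \<in> borel_measurable P0"
  unfolding psi_def by measurable

lemma psi_bnd: "\<bar>psi k x\<bar> \<le> C"
  using C0 unfolding psi_def by auto

lemma psi_ae: "AE x in P0. psi k x = phi k x"
  using phiC[rule_format, of k] by eventually_elim (auto simp: psi_def)

lemma fmP0: "finite_measure P0" using P0 unfolding prob_space_def by simp

lemma intP0: "f \<in> borel_measurable P0 \<Longrightarrow> (\<And>x. \<bar>f x\<bar> \<le> K) \<Longrightarrow> integrable P0 f"
  for f :: "'a \<Rightarrow> real"
  by (rule finite_measure.integrable_const_bound[where B=K, OF fmP0]) auto

lemma psi_int: "integrable P0 (psi k)"
  by (rule intP0[where K=C]) (auto simp: psi_bnd)

lemma psi_psi_int: "integrable P0 (\<lambda>x. psi j x * psi k x)"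
  by (rule intP0[where K="C*C"]) (auto simp: abs_mult psi_bnd intro!: mult_mono C0)

lemma psi_mean: "(\<integral>x. psi k x \<partial>P0) = 0"
proof -
  have "(\<integral>x. psi k x \<partial>P0) = (\<integral>x. phi k x \<partial>P0)"
    by (intro integral_cong_AE psi_ae) auto
  then show ?thesis using phi_mean by simp
qed

lemma psi_orth: "(\<integral>x. psi j x * psi k x \<partial>P0) = (if j = k then 1 else 0)"
proof -
  have "(\<integral>x. psi j x * psi k x \<partial>P0) = (\<integral>x. phi j x * phi k x \<partial>P0)"
    using psi_ae[of j] psi_ae[of k] by (intro integral_cong_AE) auto
  then show ?thesis using phi_orth by (simp add: inner_L2_def)
qed

lemma swap_phi:
  assumes [measurable]: "h \<in> borel_measurable P0"
  shows "(\<integral>x. h x * phi j x \<partial>P0) = (\<integral>x. h x * psi j x \<partial>P0)"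
  using psi_ae[of j] by (intro integral_cong_AE) auto

definition U :: "nat \<Rightarrow> (nat \<Rightarrow> real) \<Rightarrow> 'a \<Rightarrow> real" where
  "U B c x = (\<Sum>k<B. c k * psi k x)"

lemma U_meas[measurable]: "U B c \<in> borel_measurable P0"
  unfolding U_def by measurable

lemma U_bnd: "\<bar>U B c x\<bar> \<le> (\<Sum>k<B. \<bar>c k\<bar>) * C"
proof -
  have "\<bar>U B c x\<bar> \<le> (\<Sum>k<B. \<bar>c k * psi k x\<bar>)" unfolding U_def by (rule sum_abs)
  also have "\<dots> \<le> (\<Sum>k<B. \<bar>c k\<bar> * C)"
    by (intro sum_mono) (auto simp: abs_mult psi_bnd intro!: mult_left_mono)
  finally show ?thesis by (simp add: sum_distrib_right)
qed

lemma U_int: "integrable P0 (U B c)"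
  by (rule intP0[OF U_meas U_bnd])

lemma U_mean: "(\<integral>x. U B c x \<partial>P0) = 0"
  unfolding U_def by (simp add: integral_sum psi_int psi_mean)

lemma U_psi: "(\<integral>x. U B c x * psi j x \<partial>P0) = (if j < B then c j else 0)"
proof -
  have "(\<integral>x. U B c x * psi j x \<partial>P0) = (\<Sum>k<B. c k * (\<integral>x. psi k x * psi j x \<partial>P0))"
    unfolding U_def by (simp add: sum_distrib_right mult.assoc integral_sum psi_psi_int)
  also have "\<dots> = (\<Sum>k<B. if k = j then c k else 0)"
    by (intro sum.cong refl) (simp add: psi_orth)
  also have "\<dots> = (if j < B then c j else 0)"
    by (simp add: sum.delta)
  finally show ?thesis .
qed

lemma U_psi_int: "integrable P0 (\<lambda>x. U B c x * psi j x)"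
  by (rule intP0[where K="((\<Sum>k<B. \<bar>c k\<bar>) * C) * C"])
     (auto simp: abs_mult psi_bnd U_bnd intro!: mult_mono C0 mult_nonneg_nonneg sum_nonneg)

lemma U_U: "(\<integral>x. U B c x * U B c' x \<partial>P0) = (\<Sum>k<B. c k * c' k)"
proof -
  have "(\<integral>x. U B c x * U B c' x \<partial>P0) = (\<Sum>k<B. c' k * (\<integral>x. U B c x * psi k x \<partial>P0))"
    unfolding U_def[of B c'] by (simp add: sum_distrib_left mult.assoc mult.left_commute integral_sum U_psi_int)
  also have "\<dots> = (\<Sum>k<B. c k * c' k)"
    by (intro sum.cong refl) (simp add: U_psi)
  finally show ?thesis .
qed

end

context psetup
begin

lemma Fclass_AE:
  assumes fm[measurable]: "f \<in> borel_measurable P0" and h: "h \<in> Fclass P0 lam phi \<theta> M"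
    and ae: "AE x in P0. f x = h x"
  shows "f \<in> Fclass P0 lam phi \<theta> M"
proof -
  have hm[measurable]: "h \<in> borel_measurable P0"
    using h by (auto simp: Fclass_def in_RKHS_def L2_def split: if_splits)
  have L2eq: "L2 P0 f \<longleftrightarrow> L2 P0 h"
  proof -
    have "integrable P0 (\<lambda>x. (f x)^2) \<longleftrightarrow> integrable P0 (\<lambda>x. (h x)^2)"
      by (rule integrable_cong_AE) (use ae in auto)
    then show ?thesis unfolding L2_def by (simp add: fm hm)
  qed
  have meq: "(\<integral>x. f x \<partial>P0) = (\<integral>x. h x \<partial>P0)" using ae by (intro integral_cong_AE) auto
  have ieq: "inner_L2 P0 f (phi k) = inner_L2 P0 h (phi k)" for k
    unfolding inner_L2_def using ae by (intro integral_cong_AE) auto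
  have Req: "in_RKHS P0 lam phi f \<longleftrightarrow> in_RKHS P0 lam phi h"
    unfolding in_RKHS_def using L2eq meq ieq by simp
  have neq: "rkhs_norm P0 lam phi f = rkhs_norm P0 lam phi h"
    unfolding rkhs_norm_def using ieq by simp
  have deq: "norm_L2 P0 (\<lambda>x. f x - g x) = norm_L2 P0 (\<lambda>x. h x - g x)" if "in_RKHS P0 lam phi g" for g
  proof -
    have [measurable]: "g \<in> borel_measurable P0" using that by (simp add: in_RKHS_def L2_def)
    show ?thesis unfolding norm_L2_def using ae by (intro arg_cong[where f=sqrt] integral_cong_AE) auto
  qed
  show ?thesis
  proof (cases "\<theta> = 0")
    case True then show ?thesis using h Req neq by (simp add: Fclass_def)
  next
    case False
    have "\<exists>g. in_RKHS P0 lam phi g \<and> rkhs_norm P0 lam phi g \<le> R \<and>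
                 norm_L2 P0 (\<lambda>x. f x - g x) \<le> M * R powr (- 1 / \<theta>)" if R: "R > 0" for R
    proof -
      obtain g where "in_RKHS P0 lam phi g" "rkhs_norm P0 lam phi g \<le> R"
          "norm_L2 P0 (\<lambda>x. h x - g x) \<le> M * R powr (- 1 / \<theta>)"
        using h False R by (auto simp: Fclass_def)
      then show ?thesis using deq by (intro exI[of _ g]) simp
    qed
    then show ?thesis using False L2eq h by (simp add: Fclass_def)
  qed
qed

lemma in_Pclass:
  fixes lam :: "nat \<Rightarrow> real" and a :: real and B :: nat and \<xi> :: "nat \<Rightarrow> real"
  assumes lam_pos: "\<forall>k. 0 < lam k" and a: "0 \<le> a"
    and \<xi>: "\<xi> \<in> PiE {..<B} (\<lambda>_. {-1,1})" and small: "a * B * C \<le> 1/2"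
    and \<Delta>: "\<Delta> \<le> a^2 * B" and M: "0 < M" and \<theta>: "0 \<le> \<theta>"
    and cls: "if \<theta> = 0 then (\<Sum>k<B. a^2 / lam k) \<le> M^2
              else sqrt (a^2 * B) * (sqrt (\<Sum>k<B. a^2 / lam k)) powr (1/\<theta>) \<le> M"
  shows "density P0 (\<lambda>x. ennreal (1 + U B (\<lambda>k. a * \<xi> k) x)) \<in> Pclass P0 lam phi \<Delta> \<theta> M"
proof -
  interpret Pz: prob_space P0 by (rule P0)
  define c where "c k = a * \<xi> k" for k
  define u where "u = U B c"
  define g where "g x = 1 + u x" for x
  define Q where "Q = density P0 (\<lambda>x. ennreal (g x))"
  have um[measurable]: "u \<in> borel_measurable P0" by (simp add: u_def)
  have gm[measurable]: "g \<in> borel_measurable P0" unfolding g_def by measurable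
  have xi1: "\<xi> k = -1 \<or> \<xi> k = 1" if "k < B" for k using \<xi> that by (auto simp: PiE_iff)
  have cabs: "\<bar>c k\<bar> = a" if "k < B" for k using xi1[OF that] a by (auto simp: c_def)
  have c2: "(c k)^2 = a^2" if "k < B" for k using xi1[OF that] by (auto simp: c_def)
  have ub: "\<bar>u x\<bar> \<le> 1/2" for x
  proof -
    have "\<bar>u x\<bar> \<le> (\<Sum>k<B. \<bar>c k\<bar>) * C" unfolding u_def by (rule U_bnd)
    also have "(\<Sum>k<B. \<bar>c k\<bar>) = a * B" using cabs by simp
    finally show ?thesis using small by simp
  qed
  have g0: "0 \<le> g x" for x using ub[of x] by (simp add: g_def)
  have gb: "\<bar>g x\<bar> \<le> 3/2" for x using ub[of x] unfolding g_def by (auto simp: abs_le_iff)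
  have gi: "integrable P0 g" by (rule intP0[where K="3/2"]) (use gb in auto)
  have g1: "(\<integral>x. g x \<partial>P0) = 1"
    unfolding g_def u_def using U_int by (simp add: U_mean Pz.prob_space)
  have Qp: "prob_space Q" unfolding Q_def by (rule density_prob[OF P0 gm g0 gi g1])
  have sQ: "sets Q = sets P0" by (simp add: Q_def)
  have ac: "absolutely_continuous P0 Q" unfolding Q_def by (rule absolutely_continuousI_density) simp
  have sf: "sigma_finite_measure P0" using P0 by (rule prob_space_imp_sigma_finite)
  have aeRN: "AE x in P0. ennreal (g x) = RN_deriv P0 Q x"
    using sigma_finite_measure.RN_deriv_unique[OF sf _ Q_def[symmetric]] by simp
  have devm[measurable]: "dev P0 Q \<in> borel_measurable P0" unfolding dev_def by measurable
  have aedev: "AE x in P0. dev P0 Q x = u x"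
    using aeRN
  proof eventually_elim
    case (elim x)
    have "dev P0 Q x = enn2real (RN_deriv P0 Q x) - 1" by (simp add: dev_def)
    also have "\<dots> = enn2real (ennreal (g x)) - 1" by (simp only: elim)
    also have "\<dots> = g x - 1" using g0[of x] by simp
    finally show ?case by (simp add: g_def)
  qed
  have u2i: "integrable P0 (\<lambda>x. u x * u x)"
  proof (rule intP0[where K="1/4"])
    fix x
    have "\<bar>u x\<bar> * \<bar>u x\<bar> \<le> (1/2) * (1/2)" using ub[of x] by (intro mult_mono) auto
    then show "\<bar>u x * u x\<bar> \<le> 1/4" by (simp add: abs_mult)
  qed simp
  have uu: "(\<integral>x. u x * u x \<partial>P0) = a^2 * B"
  proof -
    have "(\<Sum>k<B. c k * c k) = (\<Sum>k<B. a^2)"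
      by (intro sum.cong refl) (metis c2 lessThan_iff power2_eq_square)
    then show ?thesis unfolding u_def U_U by simp
  qed
  have inner_u: "inner_L2 P0 u (phi j) = (if j < B then c j else 0)" for j
    unfolding inner_L2_def by (simp add: swap_phi u_def U_psi)
  have L2u: "L2 P0 u" unfolding L2_def using u2i by (simp add: power2_eq_square)
  have sums_u: "(\<lambda>j. (inner_L2 P0 u (phi j))^2 / lam j) sums (\<Sum>k<B. a^2 / lam k)"
  proof -
    have "(\<lambda>j. (inner_L2 P0 u (phi j))^2 / lam j) sums (\<Sum>j\<in>{..<B}. (inner_L2 P0 u (phi j))^2 / lam j)"
      by (rule sums_finite) (auto simp: inner_u)
    also have "(\<Sum>j\<in>{..<B}. (inner_L2 P0 u (phi j))^2 / lam j) = (\<Sum>k<B. a^2 / lam k)"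
      by (intro sum.cong refl) (auto simp: inner_u c2)
    finally show ?thesis .
  qed
  define N where "N = sqrt (\<Sum>k<B. a^2 / lam k)"
  have RKu: "in_RKHS P0 lam phi u"
    unfolding in_RKHS_def using L2u sums_u by (auto simp: u_def U_mean sums_summable)
  have Nu: "rkhs_norm P0 lam phi u = N"
    unfolding rkhs_norm_def N_def using sums_unique[OF sums_u] by simp
  have N0: "0 \<le> N" unfolding N_def using lam_pos by (intro real_sqrt_ge_zero sum_nonneg) (simp add: less_imp_le)
  have normu: "norm_L2 P0 u = sqrt (a^2 * B)"
    unfolding norm_L2_def using uu by (simp add: power2_eq_square)
  have RK0: "in_RKHS P0 lam phi (\<lambda>_. 0)"
    by (simp add: in_RKHS_def L2_def inner_L2_def)
  have N00: "rkhs_norm P0 lam phi (\<lambda>_. 0) = 0"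
    by (simp add: rkhs_norm_def inner_L2_def)
  have uF: "u \<in> Fclass P0 lam phi \<theta> M"
  proof (cases "\<theta> = 0")
    case True
    then have "(\<Sum>k<B. a^2 / lam k) \<le> M^2" using cls by simp
    then have "N \<le> M" unfolding N_def using M by (metis real_sqrt_abs real_sqrt_le_mono abs_of_pos)
    then show ?thesis using True RKu Nu by (simp add: Fclass_def)
  next
    case False
    then have \<theta>p: "0 < \<theta>" using \<theta> by simp
    have cls': "sqrt (a^2 * B) * N powr (1/\<theta>) \<le> M" using cls False by (simp add: N_def)
    have "\<exists>g. in_RKHS P0 lam phi g \<and> rkhs_norm P0 lam phi g \<le> R \<and>
                 norm_L2 P0 (\<lambda>x. u x - g x) \<le> M * R powr (- 1 / \<theta>)" if R: "R > 0" for R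
    proof (cases "N \<le> R")
      case True
      have "norm_L2 P0 (\<lambda>x. u x - u x) = 0" by (simp add: norm_L2_def)
      also have "0 \<le> M * R powr (- 1 / \<theta>)" using M by simp
      finally show ?thesis using RKu Nu True by (intro exI[of _ u]) simp
    next
      case False
      then have RN: "R < N" by simp
      have "norm_L2 P0 (\<lambda>x. u x - 0) = sqrt (a^2 * B)" using normu by simp
      also have "\<dots> \<le> M / N powr (1/\<theta>)"
      proof -
        have Npos: "0 < N powr (1/\<theta>)" using RN R by simp
        show ?thesis using cls' by (simp only: pos_le_divide_eq[OF Npos])
      qed
      also have "M / N powr (1/\<theta>) = M * N powr (-1/\<theta>)"
        by (simp add: powr_minus divide_inverse minus_divide_left[symmetric])
      also have "\<dots> \<le> M * R powr (-1/\<theta>)"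
        using M R RN \<theta>p by (intro mult_left_mono powr_mono2') auto
      finally show ?thesis using RK0 N00 R by (intro exI[of _ "\<lambda>_. 0"]) simp
    qed
    then show ?thesis using False L2u by (simp add: Fclass_def)
  qed
  have devF: "dev P0 Q \<in> Fclass P0 lam phi \<theta> M"
    by (rule Fclass_AE[OF devm uF aedev])
  have "(norm_L2 P0 (dev P0 Q))^2 = a^2 * B"
  proof -
    have "(\<integral>x. (dev P0 Q x)^2 \<partial>P0) = (\<integral>x. u x * u x \<partial>P0)"
      using aedev by (intro integral_cong_AE) (auto simp: power2_eq_square)
    then show ?thesis using uu unfolding norm_L2_def by simp
  qed
  then have "\<Delta> \<le> (norm_L2 P0 (dev P0 Q))^2" using \<Delta> by simp
  then have "Q \<in> Pclass P0 lam phi \<Delta> \<theta> M"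
    unfolding Pclass_def using Qp sQ ac devF by simp
  then show ?thesis unfolding Q_def g_def u_def c_def[abs_def] by simp
qed

end

lemma ev_small:
  assumes "p < 0" "0 < \<epsilon>"
  shows "eventually (\<lambda>n. real n powr p < \<epsilon>) sequentially"
  using order_tendstoD(2)[OF tendsto_neg_powr[OF assms(1) filterlim_real_sequentially] assms(2)] .

lemma class_identity:
  fixes s \<theta> D c Mt d x n \<kappa> r :: real
  assumes s: "0 < s" and \<theta>: "0 \<le> \<theta>" and D: "0 < D" and c: "0 < c" and Mt: "0 < Mt" and n: "0 < n"
    and r: "r = 4 * s/(4 * s+\<theta>+1)"
    and \<kappa>: "\<kappa> = (c * Mt / D powr (4 * s+\<theta>+1)) powr (1/(2 * s)) / 2"
    and d: "d = D * n powr (-r)" and x: "x = n * d"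
  shows "d powr \<theta> * d * (2 * \<kappa> * x^2) powr (2 * s) / c = Mt"
proof -
  define e where "e = 4 * s+\<theta>+1"
  have e: "0 < e" using s \<theta> by (simp add: e_def)
  have re: "r * e = 4 * s" using e by (simp add: r e_def)
  have d0: "0 < d" using D n by (simp add: d)
  have x0: "0 < x" using d0 n by (simp add: x)
  define K where "K = c * Mt / D powr e"
  have K0: "0 < K" using c Mt D by (simp add: K_def)
  have k2: "(2 * \<kappa>) powr (2 * s) = K"
  proof -
    have "2 * \<kappa> = K powr (1/(2 * s))" by (simp add: \<kappa> K_def e_def)
    then have "(2 * \<kappa>) powr (2 * s) = K powr (1/(2 * s) * (2 * s))" by (simp only: powr_powr)
    also have "1/(2 * s) * (2 * s) = 1" using s by simp
    finally show ?thesis using K0 by simp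
  qed
  have k0: "0 < 2 * \<kappa>" using K0 c Mt D by (simp add: \<kappa> K_def e_def)
  have A: "d powr \<theta> * d = D powr (\<theta>+1) * n powr (-r * (\<theta>+1))"
  proof -
    have "d powr \<theta> * d = d powr (\<theta> + 1)" using d0 by (simp add: powr_add)
    also have "\<dots> = D powr (\<theta>+1) * (n powr (-r)) powr (\<theta>+1)"
      unfolding d using D n by (intro powr_mult; simp)
    also have "(n powr (-r)) powr (\<theta>+1) = n powr (-r * (\<theta>+1))" by (rule powr_powr)
    finally show ?thesis .
  qed
  have X: "x powr (4 * s) = D powr (4 * s) * n powr (4 * s) * n powr (-r * (4 * s))"
  proof -
    have "x = D * (n * n powr (-r))" by (simp add: x d)
    then have "x powr (4 * s) = D powr (4 * s) * (n * n powr (-r)) powr (4 * s)"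
      using D n by (simp add: powr_mult)
    also have "(n * n powr (-r)) powr (4 * s) = n powr (4 * s) * (n powr (-r)) powr (4 * s)"
      using n by (simp add: powr_mult)
    also have "(n powr (-r)) powr (4 * s) = n powr (-r * (4 * s))" by (rule powr_powr)
    finally show ?thesis by simp
  qed
  have Bq: "(2 * \<kappa> * x^2) powr (2 * s) = K * x powr (4 * s)"
  proof -
    have "(2 * \<kappa> * x^2) powr (2 * s) = (2 * \<kappa>) powr (2 * s) * (x^2) powr (2 * s)"
      using k0 x0 by (simp add: powr_mult)
    also have "(x^2) powr (2 * s) = x powr (2 * (2 * s))"
    proof -
      have "x^2 = x powr 2" using x0 by (simp add: powr_numeral)
      then show ?thesis by (simp only: powr_powr)
    qed
    finally show ?thesis using k2 by simp
  qed
  have nn: "n powr (-r * (\<theta>+1)) * n powr (4 * s) * n powr (-r * (4 * s)) = 1"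
  proof -
    have "n powr (-r * (\<theta>+1)) * n powr (4 * s) * n powr (-r * (4 * s)) = n powr (-r * (\<theta>+1) + 4 * s + -r * (4 * s))"
      by (simp only: powr_add)
    also have "-r * (\<theta>+1) + 4 * s + -r * (4 * s) = 4 * s - r * e" by (simp add: e_def algebra_simps)
    also have "\<dots> = 0" using re by simp
    finally show ?thesis using n by simp
  qed
  have DD: "D powr (\<theta>+1) * D powr (4 * s) = D powr e"
    by (simp only: e_def powr_add[symmetric] add_ac)
  have "d powr \<theta> * d * (2 * \<kappa> * x^2) powr (2 * s) / c
      = (D powr (\<theta>+1) * D powr (4 * s)) * (n powr (-r * (\<theta>+1)) * n powr (4 * s) * n powr (-r * (4 * s))) * K / c"
    unfolding A Bq X by (simp only: mult_ac)
  also have "\<dots> = D powr e * 1 * K / c" by (simp only: nn DD)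
  also have "\<dots> = Mt" using c D by (simp add: K_def)
  finally show ?thesis .
qed

lemma params:
  fixes s \<theta> D c Mt C :: real and k0 :: nat
  assumes s: "s > 1/2" and \<theta>0: "0 \<le> \<theta>" and \<theta>1: "\<theta> < 2 * s - 1" and D: "D > 0"
    and c: "c > 0" and Mt: "Mt > 0" and C: "C > 0"
  defines "r \<equiv> 4 * s / (4 * s + \<theta> + 1)"
    and "\<kappa> \<equiv> (c * Mt / D powr (4 * s + \<theta> + 1)) powr (1 / (2 * s)) / 2"
  shows "eventually (\<lambda>n. 0 < D * real n powr (-r) \<and>
      real k0 + 1 \<le> real (nat \<lceil>\<kappa> * (real n * (D * real n powr (-r)))^2\<rceil>) \<and>
      D * real n powr (-r) * real (nat \<lceil>\<kappa> * (real n * (D * real n powr (-r)))^2\<rceil>) * C^2 \<le> 1/4 \<and>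
      real n * (D * real n powr (-r)) \<le> real (nat \<lceil>\<kappa> * (real n * (D * real n powr (-r)))^2\<rceil>) \<and>
      \<kappa> * (real n * (D * real n powr (-r)))^2 \<le> real (nat \<lceil>\<kappa> * (real n * (D * real n powr (-r)))^2\<rceil>) \<and>
      (D * real n powr (-r)) powr \<theta> * (D * real n powr (-r) *
         real (nat \<lceil>\<kappa> * (real n * (D * real n powr (-r)))^2\<rceil>) powr (2 * s) / c) \<le> Mt) sequentially"
proof -
  define e where "e = 4 * s + \<theta> + 1"
  have e0: "0 < e" using s \<theta>0 by (simp add: e_def)
  have r_def': "r = 4 * s / e" by (simp add: r_def e_def)
  have r1: "r - 1 < 0" using e0 \<theta>0 by (simp add: r_def' e_def field_simps)
  have r2: "2 - 3 * r < 0"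
  proof -
    have "2 * e < 3 * (4 * s)" using \<theta>1 by (simp add: e_def)
    then show ?thesis using e0 by (simp add: r_def' field_simps)
  qed
  have \<kappa>0: "0 < \<kappa>" using c Mt D by (simp add: \<kappa>_def)
  define X0 where "X0 = max (1/\<kappa>) (real k0 + 1)"
  have X0: "0 < X0" by (simp add: X0_def)
  have ev1: "eventually (\<lambda>n. real n powr (r - 1) < D / X0) sequentially"
    using r1 D X0 by (intro ev_small) auto
  have ev2: "eventually (\<lambda>n. real n powr (2 - 3 * r) < 1 / (8 * \<kappa> * C^2 * D^3)) sequentially"
    using r2 D C \<kappa>0 by (intro ev_small) auto
  have ev3: "eventually (\<lambda>n. 0 < n) sequentially" by (rule eventually_gt_at_top)
  show ?thesis using ev1 ev2 ev3
  proof eventually_elim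
    case (elim n)
    define d where "d = D * real n powr (-r)"
    define x where "x = real n * d"
    define B where "B = nat \<lceil>\<kappa> * x^2\<rceil>"
    have n0: "0 < real n" using elim by simp
    have d0: "0 < d" using D n0 by (simp add: d_def)
    have xD: "x = D * real n powr (1 - r)"
    proof -
      have "x = D * (real n powr 1 * real n powr (-r))" using n0 by (simp add: x_def d_def)
      also have "real n powr 1 * real n powr (-r) = real n powr (1 + -r)" by (simp only: powr_add)
      finally show ?thesis by simp
    qed
    have xw: "x * real n powr (r - 1) = D"
    proof -
      have "real n powr (1 - r) * real n powr (r - 1) = real n powr ((1 - r) + (r - 1))"
        by (simp only: powr_add)
      then show ?thesis using n0 by (simp add: xD)
    qed
    have w0: "0 < real n powr (r - 1)" using n0 by simp
    have xX0: "X0 < x"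
    proof -
      have "real n powr (r - 1) * X0 < D" using elim(1) X0 by (simp add: field_simps)
      then have "real n powr (r - 1) * X0 < real n powr (r - 1) * x" using xw by (simp add: mult.commute)
      then show ?thesis using w0 by simp
    qed
    have kx: "1 \<le> \<kappa> * x"
    proof -
      have "1 / \<kappa> < x" using xX0 unfolding X0_def by simp
      then show ?thesis using \<kappa>0 by (simp add: divide_less_eq mult.commute)
    qed
    have xk0: "real k0 + 1 \<le> x" using xX0 unfolding X0_def by simp
    have x0: "0 < x" using d0 n0 by (simp add: x_def)
    have kxx: "x \<le> \<kappa> * x^2"
    proof -
      have "x * 1 \<le> x * (\<kappa> * x)" using x0 kx by (intro mult_left_mono) auto
      then show ?thesis by (simp add: power2_eq_square mult_ac)
    qed
    have Bge: "\<kappa> * x^2 \<le> real B" unfolding B_def by linarith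
    have Ble: "real B \<le> 2 * \<kappa> * x^2"
    proof -
      have "real B < \<kappa> * x^2 + 1" unfolding B_def using kxx x0 by linarith
      moreover have "1 \<le> \<kappa> * x^2" using kxx xk0 by linarith
      ultimately show ?thesis by simp
    qed
    have B1: "real k0 + 1 \<le> real B" using xk0 kxx Bge by linarith
    have dx2: "d * x^2 = D^3 * real n powr (2 - 3 * r)"
    proof -
      have "d * x^2 = D * real n powr (-r) * (D * real n powr (1 - r)) * (D * real n powr (1 - r))"
        by (simp add: d_def xD power2_eq_square)
      also have "\<dots> = D^3 * (real n powr (-r) * real n powr (1 - r) * real n powr (1 - r))"
        by (simp add: power3_eq_cube mult_ac)
      also have "real n powr (-r) * real n powr (1 - r) * real n powr (1 - r) = real n powr (-r + (1 - r) + (1 - r))"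
        by (simp only: powr_add)
      also have "-r + (1 - r) + (1 - r) = 2 - 3 * r" by simp
      finally show ?thesis .
    qed
    have small: "d * real B * C^2 \<le> 1/4"
    proof -
      have "d * real B * C^2 \<le> d * (2 * \<kappa> * x^2) * C^2"
        using d0 C Ble by (intro mult_right_mono mult_left_mono) auto
      also have "\<dots> = 2 * \<kappa> * C^2 * D^3 * real n powr (2 - 3 * r)"
        using dx2 by (simp add: mult_ac)
      also have "\<dots> \<le> 2 * \<kappa> * C^2 * D^3 * (1 / (8 * \<kappa> * C^2 * D^3))"
        using elim(2) \<kappa>0 C D by (intro mult_left_mono) auto
      also have "\<dots> = 1/4" using \<kappa>0 C D by (simp add: field_simps)
      finally show ?thesis .
    qed
    have cls: "d powr \<theta> * (d * real B powr (2 * s) / c) \<le> Mt"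
    proof -
      have "real B powr (2 * s) \<le> (2 * \<kappa> * x^2) powr (2 * s)"
        using Ble s by (intro powr_mono2) auto
      then have "d powr \<theta> * (d * real B powr (2 * s) / c) \<le> d powr \<theta> * d * (2 * \<kappa> * x^2) powr (2 * s) / c"
        using d0 c by (simp add: divide_right_mono mult_left_mono mult.assoc)
      also have "\<dots> = Mt"
        by (rule class_identity[OF _ \<theta>0 D c Mt n0 meta_eq_to_obj_eq[OF r_def] meta_eq_to_obj_eq[OF \<kappa>_def] d_def x_def]) (use s in simp)
      finally show ?thesis .
    qed
    show ?case using d0 B1 small kxx Bge cls
      unfolding d_def[symmetric] x_def[symmetric] B_def[symmetric] by simp
  qed
qed

context psetup
begin

lemma g_int1: "(\<integral>x. 1 + U B c x \<partial>P0) = 1"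
proof -
  interpret Pz: prob_space P0 by (rule P0)
  show ?thesis using U_int by (simp add: U_mean Pz.prob_space)
qed

lemma g_int2: "(\<integral>x. (1 + U B c x) * (1 + U B c' x) \<partial>P0) = 1 + (\<Sum>k<B. c k * c' k)"
proof -
  interpret Pz: prob_space P0 by (rule P0)
  have uu: "integrable P0 (\<lambda>x. U B c x * U B c' x)"
    by (rule intP0[where K="((\<Sum>k<B. \<bar>c k\<bar>) * C) * ((\<Sum>k<B. \<bar>c' k\<bar>) * C)"])
       (auto simp: abs_mult U_bnd intro!: mult_mono C0 mult_nonneg_nonneg sum_nonneg)
  have "(\<lambda>x. (1 + U B c x) * (1 + U B c' x)) = (\<lambda>x. 1 + U B c x + U B c' x + U B c x * U B c' x)"
    by (simp add: algebra_simps)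
  then have "(\<integral>x. (1 + U B c x) * (1 + U B c' x) \<partial>P0) = (\<integral>x. 1 + U B c x + U B c' x + U B c x * U B c' x \<partial>P0)"
    by simp
  also have "\<dots> = 1 + 0 + 0 + (\<Sum>k<B. c k * c' k)"
    using U_int uu by (simp add: U_mean U_U Pz.prob_space)
  finally show ?thesis by simp
qed

end

lemma conv_theta:
  fixes d S \<theta> M :: real
  assumes d: "0 < d" and S: "0 \<le> S" and \<theta>: "0 < \<theta>" and M: "0 < M"
    and h: "d powr \<theta> * S \<le> M powr (2 * \<theta>)"
  shows "sqrt d * (sqrt S) powr (1/\<theta>) \<le> M"
proof -
  have e: "0 < 1 / (2 * \<theta>)" using \<theta> by simp
  have "(d powr \<theta> * S) powr (1 / (2 * \<theta>)) \<le> (M powr (2 * \<theta>)) powr (1 / (2 * \<theta>))"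
    using h d S \<theta> by (intro powr_mono2) auto
  also have "(M powr (2 * \<theta>)) powr (1 / (2 * \<theta>)) = M"
    using \<theta> M by (simp add: powr_powr)
  also have "(d powr \<theta> * S) powr (1 / (2 * \<theta>)) = (d powr \<theta>) powr (1 / (2 * \<theta>)) * S powr (1 / (2 * \<theta>))"
    using d S by (intro powr_mult; simp)
  also have "(d powr \<theta>) powr (1 / (2 * \<theta>)) = sqrt d"
  proof -
    have "(d powr \<theta>) powr (1 / (2 * \<theta>)) = d powr (\<theta> * (1 / (2 * \<theta>)))" by (rule powr_powr)
    also have "\<theta> * (1 / (2 * \<theta>)) = 1/2" using \<theta> by simp
    finally show ?thesis using d by (simp add: powr_half_sqrt)
  qed
  also have "S powr (1 / (2 * \<theta>)) = (sqrt S) powr (1/\<theta>)"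
  proof -
    have "(sqrt S) powr (1/\<theta>) = (S powr (1/2)) powr (1/\<theta>)" using S by (simp add: powr_half_sqrt)
    also have "\<dots> = S powr (1/2 * (1/\<theta>))" by (rule powr_powr)
    finally show ?thesis by simp
  qed
  finally show ?thesis .
qed

lemma lam_anti:
  fixes lam :: "nat \<Rightarrow> real"
  assumes "\<forall>k. lam (Suc k) < lam k" "k \<le> m"
  shows "lam m \<le> lam k"
  using assms(2)
proof (induction m)
  case 0 then show ?case by simp
next
  case (Suc m)
  show ?case
  proof (cases "k = Suc m")
    case True then show ?thesis by simp
  next
    case False
    then have "k \<le> m" using Suc.prems by simp
    then show ?thesis using Suc.IH assms(1) by (meson less_imp_le order_trans)
  qed
qed

lemma S_bound:
  fixes lam :: "nat \<Rightarrow> real" and a c s :: real and B k0 :: nat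
  assumes lam_pos: "\<forall>k. 0 < lam k" and lam_dec: "\<forall>k. lam (Suc k) < lam k"
    and k0: "\<forall>k\<ge>k0. c < real (Suc k) powr (2 * s) * lam k" and c: "0 < c"
    and B: "k0 + 1 \<le> B"
  shows "(\<Sum>k<B. a^2 / lam k) \<le> real B * a^2 * real B powr (2 * s) / c"
proof -
  have lB: "c < real B powr (2 * s) * lam (B - 1)"
    using k0[rule_format, of "B - 1"] B by (simp add: Suc_diff_1[symmetric] of_nat_diff)
  have inv: "1 / lam (B - 1) \<le> real B powr (2 * s) / c"
    using lB c lam_pos by (simp add: field_simps)
  have "(\<Sum>k<B. a^2 / lam k) \<le> (\<Sum>k<B. a^2 / lam (B - 1))"
  proof (intro sum_mono)
    fix k assume "k \<in> {..<B}"
    then have "lam (B - 1) \<le> lam k" by (intro lam_anti[OF lam_dec]) auto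
    then show "a^2 / lam k \<le> a^2 / lam (B - 1)"
      using lam_pos by (intro divide_left_mono) auto
  qed
  also have "\<dots> = real B * a^2 * (1 / lam (B - 1))" by simp
  also have "\<dots> \<le> real B * a^2 * (real B powr (2 * s) / c)"
    using inv by (intro mult_left_mono) auto
  finally show ?thesis by simp
qed

theorem theorem4:
  fixes P0 :: "'a measure" and K :: "'a \<Rightarrow> 'a \<Rightarrow> real"
    and lam :: "nat \<Rightarrow> real" and phi :: "nat \<Rightarrow> 'a \<Rightarrow> real"
    and s \<theta> M :: real and \<Delta> :: "nat \<Rightarrow> real"
  assumes P0: "prob_space P0"
    and K_sym: "\<forall>x y. K x y = K y x"
    and K_meas: "(\<lambda>(x, y). K x y) \<in> borel_measurable (P0 \<Otimes>\<^sub>M P0)"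
    and K_sq: "integrable (P0 \<Otimes>\<^sub>M P0) (\<lambda>(x, y). (K x y)^2)"
    and mercer: "AE z in P0 \<Otimes>\<^sub>M P0. (\<lambda>k. lam k * phi k (fst z) * phi k (snd z)) sums K (fst z) (snd z)"
    and lam_pos: "\<forall>k. 0 < lam k"
    and lam_dec: "\<forall>k. lam (Suc k) < lam k"
    and phi_L2: "\<forall>k. L2 P0 (phi k)"
    and phi_mean: "\<forall>k. (\<integral>x. phi k x \<partial>P0) = 0"
    and phi_orth: "\<forall>j k. inner_L2 P0 (phi j) (phi k) = (if j = k then 1 else 0)"
    and phi_complete: "\<forall>f. L2 P0 f \<and> (\<integral>x. f x \<partial>P0) = 0 \<and> (\<forall>k. inner_L2 P0 f (phi k) = 0)
                         \<longrightarrow> (AE x in P0. f x = 0)"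
    and phi_bdd: "\<exists>C. \<forall>k. AE x in P0. \<bar>phi k x\<bar> \<le> C"
    and s: "s > 1/2"
    and decay_lo: "0 < liminf (\<lambda>k. ereal (real (Suc k) powr (2 * s) * lam k))"
    and decay_hi: "limsup (\<lambda>k. ereal (real (Suc k) powr (2 * s) * lam k)) < \<infinity>"
    and M: "M > 0"
    and \<theta>0: "0 \<le> \<theta>" and \<theta>1: "\<theta> < 2 * s - 1"
    and rate: "limsup (\<lambda>n. ereal (\<Delta> n * real n powr (4 * s / (4 * s + \<theta> + 1)))) < \<infinity>"
  shows "0 < liminf (\<lambda>n. INF T\<in>tests P0 n.
            ereal (\<integral>\<omega>. T \<omega> \<partial>(PiM {..<n} (\<lambda>_. P0))) + type2 P0 lam phi n T (\<Delta> n) \<theta> M)"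
proof -
  obtain C0 where C0: "\<forall>k. AE x in P0. \<bar>phi k x\<bar> \<le> C0" using phi_bdd by blast
  define C where "C = max C0 1"
  have C1: "0 < C" by (simp add: C_def)
  have phiC: "\<forall>k. AE x in P0. \<bar>phi k x\<bar> \<le> C"
  proof
    fix k
    show "AE x in P0. \<bar>phi k x\<bar> \<le> C" using C0[rule_format, of k]
      by eventually_elim (simp add: C_def le_max_iff_disj)
  qed
  interpret ps: psetup P0 phi C
    using C1 by (intro psetup.intro P0 phi_L2 phi_mean phi_orth phiC) simp
  obtain c where c: "0 < ereal c" "ereal c < liminf (\<lambda>k. ereal (real (Suc k) powr (2 * s) * lam k))"
    using ereal_dense2[OF decay_lo] by blast
  have c0: "0 < c" using c by simp
  obtain k0 where k0: "\<forall>k\<ge>k0. c < real (Suc k) powr (2 * s) * lam k"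
    using less_LiminfD[OF c(2)] by (auto simp: eventually_sequentially)
  define r where "r = 4 * s / (4 * s + \<theta> + 1)"
  obtain D0 where D0: "limsup (\<lambda>n. ereal (\<Delta> n * real n powr (4 * s / (4 * s + \<theta> + 1)))) < ereal D0"
    using ereal_dense2[OF rate] by blast
  define D where "D = max D0 1"
  have D: "0 < D" by (simp add: D_def)
  have evD: "eventually (\<lambda>n. \<Delta> n * real n powr r < D) sequentially"
    using Limsup_lessD[OF D0] by eventually_elim (auto simp: D_def r_def)
  define Mt where "Mt = (if \<theta> = 0 then M^2 else M powr (2 * \<theta>))"
  have Mt: "0 < Mt" using M by (simp add: Mt_def)
  define \<kappa> where "\<kappa> = (c * Mt / D powr (4 * s + \<theta> + 1)) powr (1 / (2 * s)) / 2"
  have \<kappa>0: "0 < \<kappa>" using c0 Mt D by (simp add: \<kappa>_def)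
  note evP = params[OF s \<theta>0 \<theta>1 D c0 Mt C1, of k0]
  define \<epsilon> where "\<epsilon> = 3 / (4 * (exp (1/\<kappa>) + 1))"
  have \<epsilon>0: "0 < \<epsilon>" by (simp add: \<epsilon>_def add_pos_pos)
  have ev: "eventually (\<lambda>n. ereal \<epsilon> \<le> (INF T\<in>tests P0 n.
            ereal (\<integral>\<omega>. T \<omega> \<partial>(PiM {..<n} (\<lambda>_. P0))) + type2 P0 lam phi n T (\<Delta> n) \<theta> M)) sequentially"
    using evP evD eventually_gt_at_top[of 0]
  proof eventually_elim
    case (elim n)
    define d where "d = D * real n powr (-r)"
    define x where "x = real n * d"
    define B where "B = nat \<lceil>\<kappa> * x^2\<rceil>"
    have n0: "0 < real n" using elim by simp
    have P: "0 < d" "real k0 + 1 \<le> real B" "d * real B * C^2 \<le> 1/4" "x \<le> real B" "\<kappa> * x^2 \<le> real B"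
        "d powr \<theta> * (d * real B powr (2 * s) / c) \<le> Mt"
      using elim(1) unfolding d_def[symmetric] x_def[symmetric] B_def[symmetric] r_def[symmetric] \<kappa>_def[symmetric]
      by auto
    have B0: "0 < real B" using P(2) by linarith
    have Bk0: "k0 + 1 \<le> B" using P(2) by linarith
    have \<Delta>d: "\<Delta> n \<le> d"
    proof -
      have "\<Delta> n * real n powr r < D" using elim(2) .
      then have "\<Delta> n < D / real n powr r" using n0 by (simp add: field_simps)
      then show ?thesis using n0 by (simp add: d_def powr_minus divide_inverse)
    qed
    define a where "a = sqrt (d / real B)"
    have a0: "0 \<le> a" using P(1) B0 by (simp add: a_def)
    have a2: "a^2 = d / real B" using P(1) B0 by (simp add: a_def)
    have a2B: "a^2 * real B = d" using a2 B0 by simp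
    have aBC: "a * real B * C \<le> 1/2"
    proof -
      have "(a * real B * C)^2 = (a^2 * real B) * real B * C^2"
        by (simp only: power_mult_distrib power2_eq_square mult_ac)
      then have eq: "(a * real B * C)^2 = d * real B * C^2" using a2B by simp
      have q: "(1/2::real)^2 = 1/4" by (simp add: power2_eq_square)
      have "(a * real B * C)^2 \<le> (1/2)^2" unfolding q using P(3) eq by linarith
      then show ?thesis by (rule power2_le_imp_le) simp
    qed
    define X where "X = PiE {..<B} (\<lambda>_. {-1, 1::real})"
    have Xfin: "finite X" by (simp add: X_def finite_PiE)
    have cardX: "card X = 2 ^ B" by (simp add: X_def card_PiE numeral_2_eq_2)
    have Xne: "X \<noteq> {}" using cardX by auto
    define g where "g \<xi> x = 1 + ps.U B (\<lambda>k. a * \<xi> k) x" for \<xi> x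
    have Ub: "\<bar>ps.U B (\<lambda>k. a * \<xi> k) x\<bar> \<le> 1/2" if "\<xi> \<in> X" for \<xi> x
    proof -
      have "\<bar>ps.U B (\<lambda>k. a * \<xi> k) x\<bar> \<le> (\<Sum>k<B. \<bar>a * \<xi> k\<bar>) * C" by (rule ps.U_bnd)
      also have "(\<Sum>k<B. \<bar>a * \<xi> k\<bar>) = (\<Sum>k<B. a)"
      proof (intro sum.cong refl)
        fix k assume "k \<in> {..<B}"
        then have "\<xi> k = -1 \<or> \<xi> k = 1" using that by (auto simp: X_def PiE_iff)
        then show "\<bar>a * \<xi> k\<bar> = a" using a0 by auto
      qed
      finally show ?thesis using aBC by (simp add: mult_ac)
    qed
    define S where "S = (\<Sum>k<B. a^2 / lam k)"
    have S0: "0 \<le> S" unfolding S_def using lam_pos by (intro sum_nonneg) (simp add: less_imp_le)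
    have Sb: "S \<le> d * real B powr (2 * s) / c"
      using S_bound[OF lam_pos lam_dec k0 c0 Bk0, of a] a2B by (simp add: S_def mult.commute)
    have dS: "d powr \<theta> * S \<le> Mt"
    proof -
      have "d powr \<theta> * S \<le> d powr \<theta> * (d * real B powr (2 * s) / c)"
        using Sb by (intro mult_left_mono) auto
      then show ?thesis using P(6) by simp
    qed
    have cls: "if \<theta> = 0 then (\<Sum>k<B. a^2 / lam k) \<le> M^2
              else sqrt (a^2 * B) * (sqrt (\<Sum>k<B. a^2 / lam k)) powr (1/\<theta>) \<le> M"
    proof (cases "\<theta> = 0")
      case True
      then show ?thesis using dS P(1) by (simp add: Mt_def S_def)
    next
      case False
      then have "0 < \<theta>" using \<theta>0 by simp
      then have "sqrt d * (sqrt S) powr (1/\<theta>) \<le> M"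
        using conv_theta[OF P(1) S0 _ M] dS False by (simp add: Mt_def)
      then show ?thesis using False a2B by (simp add: S_def)
    qed
    have inP: "density P0 (\<lambda>x. ennreal (g \<xi> x)) \<in> Pclass P0 lam phi (\<Delta> n) \<theta> M" if "\<xi> \<in> X" for \<xi>
      unfolding g_def
      using ps.in_Pclass[OF lam_pos a0 that[unfolded X_def] _ _ M \<theta>0 cls] aBC \<Delta>d a2B by simp
    define t where "t = real n * a^2"
    have t0: "0 \<le> t" by (simp add: t_def)
    have tx: "t = x / real B" using a2 by (simp add: t_def x_def)
    have t1: "t \<le> 1" using tx P(4) B0 by (simp add: divide_le_eq)
    have Bt: "real B * t^2 \<le> 1 / \<kappa>"
    proof -
      have "real B * t^2 = x^2 / real B" using tx B0 by (simp add: power2_eq_square field_simps)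
      also have "\<dots> \<le> 1 / \<kappa>" using P(5) B0 \<kappa>0 by (simp add: field_simps)
      finally show ?thesis .
    qed
    have gg: "(\<integral>y. g \<xi> y * g \<xi>' y \<partial>P0) = 1 + a^2 * (\<Sum>k<B. \<xi> k * \<xi>' k)" for \<xi> \<xi>'
      unfolding g_def ps.g_int2 by (simp add: sum_distrib_left power2_eq_square mult_ac)
    have gpos: "0 \<le> g \<xi> y" if "\<xi> \<in> X" for \<xi> y using Ub[OF that, of y] by (simp add: g_def abs_le_iff)
    have gg0: "0 \<le> (\<integral>y. g \<xi> y * g \<xi>' y \<partial>P0)" if "\<xi> \<in> X" "\<xi>' \<in> X" for \<xi> \<xi>'
      by (intro integral_nonneg_AE AE_I2 mult_nonneg_nonneg gpos that)
    have VL: "(\<Sum>\<xi>\<in>X. \<Sum>\<xi>'\<in>X. (\<integral>y. g \<xi> y * g \<xi>' y \<partial>P0) ^ n) / (real (card X))^2 \<le> exp (1/\<kappa>)"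
    proof -
      have "(\<Sum>\<xi>\<in>X. \<Sum>\<xi>'\<in>X. (\<integral>y. g \<xi> y * g \<xi>' y \<partial>P0) ^ n)
          \<le> (\<Sum>\<xi>\<in>X. \<Sum>\<xi>'\<in>X. exp (t * (\<Sum>k\<in>{..<B}. \<xi> k * \<xi>' k)))"
      proof (intro sum_mono)
        fix \<xi> \<xi>' assume that: "\<xi> \<in> X" "\<xi>' \<in> X"
        have "(\<integral>y. g \<xi> y * g \<xi>' y \<partial>P0) ^ n \<le> exp (a^2 * (\<Sum>k<B. \<xi> k * \<xi>' k)) ^ n"
          using gg0[OF that] unfolding gg
          by (intro power_mono) (auto simp: add.commute[of _ 1] exp_ge_add_one_self)
        also have "\<dots> = exp (t * (\<Sum>k\<in>{..<B}. \<xi> k * \<xi>' k))"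
          by (simp add: t_def exp_of_nat_mult[symmetric] mult_ac)
        finally show "(\<integral>y. g \<xi> y * g \<xi>' y \<partial>P0) ^ n \<le> exp (t * (\<Sum>k\<in>{..<B}. \<xi> k * \<xi>' k))" .
      qed
      also have "\<dots> \<le> 4 ^ card {..<B} * exp (real (card {..<B}) * t^2)"
        unfolding X_def by (rule rademacher_bound[OF _ t0 t1]) simp
      also have "\<dots> = 4 ^ B * exp (real B * t^2)" by simp
      also have "\<dots> \<le> 4 ^ B * exp (1/\<kappa>)" using Bt by simp
      finally have "(\<Sum>\<xi>\<in>X. \<Sum>\<xi>'\<in>X. (\<integral>y. g \<xi> y * g \<xi>' y \<partial>P0) ^ n) \<le> 4 ^ B * exp (1/\<kappa>)" .
      moreover have "(real (card X))^2 = 4 ^ B"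
      proof -
        have "(real (card X))^2 = ((2::real) ^ B)^2" by (simp add: cardX)
        also have "\<dots> = (2^2) ^ B" by (simp only: power_mult[symmetric] mult.commute)
        finally show ?thesis by simp
      qed
      ultimately show ?thesis by (simp add: divide_le_eq mult.commute)
    qed
    show ?case
    proof (rule INF_greatest)
      fix T assume T: "T \<in> tests P0 n"
      have Tm: "T \<in> borel_measurable (PiM {..<n} (\<lambda>_. P0))" and T01: "\<And>\<omega>. 0 \<le> T \<omega> \<and> T \<omega> \<le> 1"
        using T by (auto simp: tests_def)
      have gm: "g \<xi> \<in> borel_measurable P0" for \<xi> unfolding g_def by measurable
      have g0: "0 \<le> g \<xi> y" if "\<xi> \<in> X" for \<xi> y using Ub[OF that, of y] by (simp add: g_def abs_le_iff)
      have gb: "g \<xi> y \<le> 3/2" if "\<xi> \<in> X" for \<xi> y using Ub[OF that, of y] by (simp add: g_def abs_le_iff)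
      have g1: "(\<integral>y. g \<xi> y \<partial>P0) = 1" for \<xi> unfolding g_def by (rule ps.g_int1)
      obtain \<xi> where \<xi>: "\<xi> \<in> X" and bnd: "3 / (4 * (exp (1/\<kappa>) + 1)) \<le> (\<integral>\<omega>. T \<omega> \<partial>PiM {..<n} (\<lambda>_. P0))
            + (\<integral>\<omega>. 1 - T \<omega> \<partial>PiM {..<n} (\<lambda>_. density P0 (\<lambda>x. ennreal (g \<xi> x))))"
        using lecam[OF P0 Xfin Xne gm g0 gb g1 Tm T01 _ VL] by auto
      have "ereal (\<integral>\<omega>. 1 - T \<omega> \<partial>PiM {..<n} (\<lambda>_. density P0 (\<lambda>x. ennreal (g \<xi> x)))) \<le> type2 P0 lam phi n T (\<Delta> n) \<theta> M"
        unfolding type2_def by (rule SUP_upper[OF inP[OF \<xi>]])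
      then have "ereal (\<integral>\<omega>. T \<omega> \<partial>PiM {..<n} (\<lambda>_. P0)) + ereal (\<integral>\<omega>. 1 - T \<omega> \<partial>PiM {..<n} (\<lambda>_. density P0 (\<lambda>x. ennreal (g \<xi> x))))
          \<le> ereal (\<integral>\<omega>. T \<omega> \<partial>PiM {..<n} (\<lambda>_. P0)) + type2 P0 lam phi n T (\<Delta> n) \<theta> M"
        by (rule add_left_mono)
      moreover have "ereal \<epsilon> \<le> ereal (\<integral>\<omega>. T \<omega> \<partial>PiM {..<n} (\<lambda>_. P0)) + ereal (\<integral>\<omega>. 1 - T \<omega> \<partial>PiM {..<n} (\<lambda>_. density P0 (\<lambda>x. ennreal (g \<xi> x))))"
        using bnd by (simp add: \<epsilon>_def)
      ultimately show "ereal \<epsilon> \<le> ereal (\<integral>\<omega>. T \<omega> \<partial>PiM {..<n} (\<lambda>_. P0)) + type2 P0 lam phi n T (\<Delta> n) \<theta> M"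
        by (rule order_trans[rotated])
    qed
  qed
  have "ereal \<epsilon> \<le> liminf (\<lambda>n. INF T\<in>tests P0 n.
            ereal (\<integral>\<omega>. T \<omega> \<partial>(PiM {..<n} (\<lambda>_. P0))) + type2 P0 lam phi n T (\<Delta> n) \<theta> M)"
    by (rule Liminf_bounded[OF ev])
  then show ?thesis using \<epsilon>0 by (meson ereal_less(2) less_le_trans)
qed

end
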